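(* Let $a<b$, let $p,q\in[1,\infty]$ be conjugate exponents, and let $f\colon[a,b]\to\mathbb{R}$ be absolutely continuous with $f'\in L^p([a,b])$. Define $E_1(f)=\int_a^b f(x)\,dx-\frac{b-a}{2}[f(a)+f(b)]$. Then $$|E_1(f)|\leq \begin{cases}\frac12\|f'\|_1(b-a), & p=1,\\ \frac12\left(\frac{1}{q+1}\right)^{1/q}\|f'\|_p(b-a)^{1+1/q}, & 1<p<\infty,\\ \frac14\|f'\|_\infty(b-a)^2, & p=\infty,\end{cases}$$ and these estimates are sharp: in each case the coefficient of the norm of $f'$ cannot be reduced.
   Context: Norms are Lebesgue $L^p$ norms over $[a,b]$ ($\|\cdot\|_\infty$ is the essential supremum). Conjugate exponents satisfy $1/p+1/q=1$ with $1/\infty=0$. *)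

theory Defs
  imports "HOL-Analysis.Analysis"
begin

definition abs_continuous_on :: "real \<Rightarrow> real \<Rightarrow> (real \<Rightarrow> real) \<Rightarrow> bool" where
  "abs_continuous_on a b f \<longleftrightarrow>
     (\<forall>\<epsilon>>0. \<exists>\<delta>>0. \<forall>(n::nat) (x::nat \<Rightarrow> real) (y::nat \<Rightarrow> real).
        (\<forall>i<n. a \<le> x i \<and> x i \<le> y i \<and> y i \<le> b) \<and>
        (\<forall>i<n. \<forall>j<n. i \<noteq> j \<longrightarrow> y i \<le> x j \<or> y j \<le> x i) \<and>
        (\<Sum>i<n. y i - x i) < \<delta>
        \<longrightarrow> (\<Sum>i<n. \<bar>f (y i) - f (x i)\<bar>) < \<epsilon>)"

definition conjugate_exponents :: "ereal \<Rightarrow> ereal \<Rightarrow> bool" where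
  "conjugate_exponents p q \<longleftrightarrow>
     (p = 1 \<and> q = \<infinity>) \<or> (p = \<infinity> \<and> q = 1) \<or>
     (1 < p \<and> p < \<infinity> \<and> 1 < q \<and> q < \<infinity> \<and>
      1 / real_of_ereal p + 1 / real_of_ereal q = 1)"

definition memLp :: "ereal \<Rightarrow> real \<Rightarrow> real \<Rightarrow> (real \<Rightarrow> real) \<Rightarrow> bool" where
  "memLp p a b g \<longleftrightarrow> g \<in> borel_measurable (lebesgue_on {a..b}) \<and>
     (if p = \<infinity> then (\<exists>C. AE x in lebesgue_on {a..b}. \<bar>g x\<bar> \<le> C)
      else integrable (lebesgue_on {a..b}) (\<lambda>x. \<bar>g x\<bar> powr real_of_ereal p))"

definition Lp_norm :: "ereal \<Rightarrow> real \<Rightarrow> real \<Rightarrow> (real \<Rightarrow> real) \<Rightarrow> real" where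
  "Lp_norm p a b g =
     (if p = \<infinity> then Inf {C. 0 \<le> C \<and> (AE x in lebesgue_on {a..b}. \<bar>g x\<bar> \<le> C)}
      else (integral\<^sup>L (lebesgue_on {a..b}) (\<lambda>x. \<bar>g x\<bar> powr real_of_ereal p))
             powr (1 / real_of_ereal p))"

definition E1 :: "real \<Rightarrow> real \<Rightarrow> (real \<Rightarrow> real) \<Rightarrow> real" where
  "E1 a b f = integral {a..b} f - (b - a) / 2 * (f a + f b)"

definition trap_coeff :: "ereal \<Rightarrow> ereal \<Rightarrow> real" where
  "trap_coeff p q =
     (if p = 1 then 1/2
      else if p = \<infinity> then 1/4
      else 1/2 * (1 / (real_of_ereal q + 1)) powr (1 / real_of_ereal q))"

definition trap_expo :: "ereal \<Rightarrow> ereal \<Rightarrow> real" where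
  "trap_expo p q =
     (if p = 1 then 1
      else if p = \<infinity> then 2
      else 1 + 1 / real_of_ereal q)"

end

theory Submission
  imports Defs
begin


lemma ac_uc:
  assumes "abs_continuous_on a b f" "e > 0"
  obtains d where "d > 0" "\<And>x y. a \<le> x \<Longrightarrow> x \<le> y \<Longrightarrow> y \<le> b \<Longrightarrow> y - x < d \<Longrightarrow> \<bar>f y - f x\<bar> < e"
proof -
  obtain d where d: "d > 0" and H0: "\<forall>(n::nat) X Y. (\<forall>i<n. a \<le> X i \<and> X i \<le> Y i \<and> Y i \<le> b) \<and>
        (\<forall>i<n. \<forall>j<n. i \<noteq> j \<longrightarrow> Y i \<le> X j \<or> Y j \<le> X i) \<and>
        (\<Sum>i<n. Y i - X i) < d \<longrightarrow> (\<Sum>i<n. \<bar>f (Y i) - f (X i)\<bar>) < e"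
    using assms(1)[unfolded abs_continuous_on_def, rule_format, OF assms(2)] by blast
  note H = H0[rule_format]
  show ?thesis
  proof (rule that[OF d])
    fix x y assume "a \<le> x" "x \<le> y" "y \<le> b" "y - x < d"
    then show "\<bar>f y - f x\<bar> < e"
      using H[of 1 "\<lambda>_. x" "\<lambda>_. y"] by auto
  qed
qed

lemma ac_cont:
  assumes "abs_continuous_on a b f"
  shows "continuous_on {a..b} f"
  unfolding continuous_on_iff
proof (intro ballI allI impI)
  fix x e :: real assume x: "x \<in> {a..b}" and e: "0 < e"
  obtain d where d: "d > 0" and H: "\<And>x y. a \<le> x \<Longrightarrow> x \<le> y \<Longrightarrow> y \<le> b \<Longrightarrow> y - x < d \<Longrightarrow> \<bar>f y - f x\<bar> < e"
    using ac_uc[OF assms e] by blast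
  show "\<exists>d>0. \<forall>x'\<in>{a..b}. dist x' x < d \<longrightarrow> dist (f x') (f x) < e"
  proof (intro exI conjI ballI impI)
    fix y assume y: "y \<in> {a..b}" "dist y x < d"
    show "dist (f y) (f x) < e"
    proof (cases "x \<le> y")
      case True then show ?thesis using H[of x y] x y by (auto simp: dist_real_def)
    next
      case False then show ?thesis using H[of y x] x y by (auto simp: dist_real_def abs_minus_commute)
    qed
  qed (rule d)
qed

lemma ac_set:
  assumes "abs_continuous_on a b f" "e > 0"
  obtains d where "d > 0" "\<And>S. finite S \<Longrightarrow> (\<forall>(u,v)\<in>S. a \<le> u \<and> u \<le> v \<and> v \<le> b) \<Longrightarrow>
     (\<forall>(u,v)\<in>S. \<forall>(u',v')\<in>S. (u,v) \<noteq> (u',v') \<longrightarrow> v \<le> u' \<or> v' \<le> u) \<Longrightarrow>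
     (\<Sum>(u,v)\<in>S. v - u) < d \<Longrightarrow> (\<Sum>(u,v)\<in>S. \<bar>f v - f u\<bar>) < e"
proof -
  obtain d where d: "d > 0" and H0: "\<forall>(n::nat) X Y. (\<forall>i<n. a \<le> X i \<and> X i \<le> Y i \<and> Y i \<le> b) \<and>
        (\<forall>i<n. \<forall>j<n. i \<noteq> j \<longrightarrow> Y i \<le> X j \<or> Y j \<le> X i) \<and>
        (\<Sum>i<n. Y i - X i) < d \<longrightarrow> (\<Sum>i<n. \<bar>f (Y i) - f (X i)\<bar>) < e"
    using assms(1)[unfolded abs_continuous_on_def, rule_format, OF assms(2)] by blast
  note H = H0[rule_format]
  show ?thesis
  proof (rule that[OF d])
    fix S :: "(real \<times> real) set"
    assume fin: "finite S" and S1: "\<forall>(u,v)\<in>S. a \<le> u \<and> u \<le> v \<and> v \<le> b"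
      and S2: "\<forall>(u,v)\<in>S. \<forall>(u',v')\<in>S. (u,v) \<noteq> (u',v') \<longrightarrow> v \<le> u' \<or> v' \<le> u"
      and S3: "(\<Sum>(u,v)\<in>S. v - u) < d"
    obtain h where h: "bij_betw h {..<card S} S"
      using ex_bij_betw_nat_finite[OF fin] by (auto simp: lessThan_atLeast0)
    define X where "X i = fst (h i)" for i
    define Y where "Y i = snd (h i)" for i
    have sumeq: "(\<Sum>i<card S. G (X i) (Y i)) = (\<Sum>(u,v)\<in>S. G u v)" for G :: "real \<Rightarrow> real \<Rightarrow> real"
    proof -
      have "(\<Sum>(u,v)\<in>S. G u v) = (\<Sum>i<card S. (\<lambda>(u,v). G u v) (h i))"
        using sum.reindex_bij_betw[OF h, of "\<lambda>(u,v). G u v"] by simp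
      then show ?thesis by (simp add: X_def Y_def split_beta)
    qed
    have hin: "i < card S \<Longrightarrow> h i \<in> S" for i using h bij_betwE by blast
    have "(\<Sum>i<card S. \<bar>f (Y i) - f (X i)\<bar>) < e"
    proof (rule H, intro conjI allI impI)
      fix i assume "i < card S"
      then show "a \<le> X i" "X i \<le> Y i" "Y i \<le> b" using hin[of i] S1 by (auto simp: X_def Y_def)
    next
      fix i j assume ij: "i < card S" "j < card S" "i \<noteq> j"
      then have "h i \<noteq> h j" using h by (metis bij_betw_iff_bijections lessThan_iff)
      obtain u v where uv: "h i = (u,v)" by fastforce
      obtain u' v' where uv': "h j = (u',v')" by fastforce
      have "v \<le> u' \<or> v' \<le> u" using S2 hin[OF ij(1)] hin[OF ij(2)] \<open>h i \<noteq> h j\<close> uv uv' by fastforce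
      then show "Y i \<le> X j \<or> Y j \<le> X i" using uv uv' by (simp add: X_def Y_def)
    next
      show "(\<Sum>i<card S. Y i - X i) < d" using S3 sumeq[of "\<lambda>u v. v - u"] by simp
    qed
    then show "(\<Sum>(u,v)\<in>S. \<bar>f v - f u\<bar>) < e" using sumeq[of "\<lambda>u v. \<bar>f v - f u\<bar>"] by simp
  qed
qed



lemma sum_intervals_le_measure:
  assumes fin: "finite S" and sub: "\<forall>(u,v)\<in>S. u \<le> v \<and> {u..v} \<subseteq> T"
    and dis: "\<forall>(u,v)\<in>S. \<forall>(u',v')\<in>S. (u,v) \<noteq> (u',v') \<longrightarrow> v \<le> u' \<or> v' \<le> u"
    and T: "T \<in> lmeasurable"
  shows "(\<Sum>(u,v)\<in>S. v - u) \<le> measure lebesgue T"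
proof -
  let ?F = "\<lambda>(u,v). {u..v::real}"
  have "measure lebesgue (\<Union>(?F ` S)) = (\<Sum>z\<in>S. measure lebesgue (?F z))"
  proof (rule measure_negligible_finite_Union_image[OF fin])
    show "pairwise (\<lambda>x y. negligible (?F x \<inter> ?F y)) S"
      unfolding pairwise_def
    proof (intro ballI impI)
      fix x y assume xy: "x \<in> S" "y \<in> S" "x \<noteq> y"
      obtain u v where x: "x = (u,v)" by fastforce
      obtain u' v' where y: "y = (u',v')" by fastforce
      have "v \<le> u' \<or> v' \<le> u" using dis xy x y by fastforce
      then have "{u..v} \<inter> {u'..v'} \<subseteq> {u,v}" by auto
      then show "negligible (?F x \<inter> ?F y)"
        unfolding x y by (simp add: negligible_subset[of "{u,v}"])
    qed
  qed auto
  also have "\<dots> = (\<Sum>(u,v)\<in>S. v - u)"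
    by (rule sum.cong) (use sub in \<open>auto simp: measure_completion\<close>)
  finally have eq: "measure lebesgue (\<Union>(?F ` S)) = (\<Sum>(u,v)\<in>S. v - u)" .
  have "measure lebesgue (\<Union>(?F ` S)) \<le> measure lebesgue T"
  proof (rule measure_mono_fmeasurable)
    show "(\<Union>(?F ` S)) \<in> sets lebesgue" 
      by (rule sets.finite_UN[OF fin]) (auto simp: split_beta)
  qed (use sub T in \<open>auto\<close>)
  then show ?thesis using eq by simp
qed



lemma tag_interval:
  assumes "p tagged_division_of {a..b}" "(x,K) \<in> p"
  obtains u v where "K = {u..v}" "u \<le> v" "x \<in> K" "K \<subseteq> {a..b}" "Inf K = u" "Sup K = v" "measure lborel K = v - u"
proof -
  obtain u v where K: "K = cbox u v" using assms tagged_division_ofD(4) by blast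
  have xK: "x \<in> K" "K \<subseteq> {a..b}" using assms tagged_division_ofD(2,3) by blast+
  then have "u \<le> v" using K by auto
  then show ?thesis using that[of u v] K xK by auto
qed

lemma ac_ftc:
  fixes f g :: "real \<Rightarrow> real"
  assumes ab: "a < b" and ac: "abs_continuous_on a b f" and E: "negligible E"
    and der: "\<And>x. x \<in> {a..b} - E \<Longrightarrow> (f has_real_derivative g x) (at x)"
  shows "(g has_integral (f b - f a)) {a..b}"
proof -
  define g0 where "g0 x = (if x \<in> E then 0 else g x)" for x
  have "(g0 has_integral (f b - f a)) {a..b}"
    unfolding has_integral_factor_content_real
  proof (intro allI impI)
    fix e :: real assume e: "e > 0"
    have eba: "e * (b - a) / 2 > 0" using e ab by simp
    obtain \<delta> where \<delta>: "\<delta> > 0" and ACS: "\<And>S. finite S \<Longrightarrow> (\<forall>(u,v)\<in>S. a \<le> u \<and> u \<le> v \<and> v \<le> b) \<Longrightarrow>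
     (\<forall>(u,v)\<in>S. \<forall>(u',v')\<in>S. (u,v) \<noteq> (u',v') \<longrightarrow> v \<le> u' \<or> v' \<le> u) \<Longrightarrow>
     (\<Sum>(u,v)\<in>S. v - u) < \<delta> \<Longrightarrow> (\<Sum>(u,v)\<in>S. \<bar>f v - f u\<bar>) < e * (b - a) / 2"
      using ac_set[OF ac eba] by blast
    obtain T where T: "open T" "E \<subseteq> T" "(T - E) \<in> lmeasurable" "emeasure lebesgue (T - E) < ennreal \<delta>"
      using sets_lebesgue_outer_open[OF negligible_imp_sets[OF E] \<delta>] by blast
    have TE: "T = (T - E) \<union> E" using T(2) by blast
    have Tm: "T \<in> lmeasurable"
      using TE fmeasurable.Un[OF T(3) negligible_imp_measurable[OF E]] by metis
    have "measure lebesgue (T - E) = measure lebesgue T"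
      by (rule measure_Diff_null_set) (use Tm E in \<open>auto simp: negligible_iff_null_sets\<close>)
    moreover have "measure lebesgue (T - E) < \<delta>"
      using T(3,4) \<delta> by (simp add: emeasure_eq_measure2 ennreal_less_iff)
    ultimately have T\<delta>: "measure lebesgue T < \<delta>" by simp
    have "\<forall>x. \<exists>d>0. (x \<in> E \<longrightarrow> ball x d \<subseteq> T) \<and>
       (x \<in> {a..b} - E \<longrightarrow> (\<forall>y. \<bar>y - x\<bar> < d \<longrightarrow> \<bar>f y - f x - (y - x) * g x\<bar> \<le> e/2 * \<bar>y - x\<bar>))"
    proof
      fix x
      show "\<exists>d>0. (x \<in> E \<longrightarrow> ball x d \<subseteq> T) \<and>
       (x \<in> {a..b} - E \<longrightarrow> (\<forall>y. \<bar>y - x\<bar> < d \<longrightarrow> \<bar>f y - f x - (y - x) * g x\<bar> \<le> e/2 * \<bar>y - x\<bar>))"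
      proof (cases "x \<in> E")
        case True
        then obtain r where "r > 0" "ball x r \<subseteq> T" using T(1,2) open_contains_ball by blast
        then show ?thesis using True by blast
      next
        case False
        show ?thesis
        proof (cases "x \<in> {a..b}")
          case True
          with False have "(f has_derivative (\<lambda>h. g x * h)) (at x)"
            using der[of x] by (simp add: has_field_derivative_def)
          then obtain d where "d > 0" "\<forall>y. norm(y - x) < d \<longrightarrow> norm (f y - f x - g x * (y - x)) \<le> e/2 * norm (y - x)"
            unfolding has_derivative_at_alt using e by (meson half_gt_zero)
          then show ?thesis using False by (auto simp: mult.commute)
        next
          case False then show ?thesis using \<open>x \<notin> E\<close> by (intro exI[of _ 1]) auto
        qed
      qed
    qed
    then have "\<exists>d. \<forall>x. d x > 0 \<and> (x \<in> E \<longrightarrow> ball x (d x) \<subseteq> T) \<and>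
       (x \<in> {a..b} - E \<longrightarrow> (\<forall>y. \<bar>y - x\<bar> < d x \<longrightarrow> \<bar>f y - f x - (y - x) * g x\<bar> \<le> e/2 * \<bar>y - x\<bar>))"
      by (rule choice)
    then obtain d where d0: "\<And>x. d x > 0" and dE: "\<And>x. x \<in> E \<Longrightarrow> ball x (d x) \<subseteq> T"
      and dD: "\<And>x y. x \<in> {a..b} - E \<Longrightarrow> \<bar>y - x\<bar> < d x \<Longrightarrow> \<bar>f y - f x - (y - x) * g x\<bar> \<le> e/2 * \<bar>y - x\<bar>"
      by blast
    show "\<exists>\<gamma>. gauge \<gamma> \<and> (\<forall>p. p tagged_division_of {a..b} \<and> \<gamma> fine p \<longrightarrow>
          norm (sum (\<lambda>(x,k). measure lborel k *\<^sub>R g0 x) p - (f b - f a)) \<le> e * measure lborel {a..b})"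
    proof (intro exI conjI allI impI)
      show "gauge (\<lambda>x. ball x (d x))" using gauge_ball_dependent d0 by blast
      fix p assume "p tagged_division_of {a..b} \<and> (\<lambda>x. ball x (d x)) fine p"
      then have ptag: "p tagged_division_of {a..b}" and finep: "(\<lambda>x. ball x (d x)) fine p" by auto
      have finp: "finite p" using ptag by blast
      have fb: "f b - f a = (\<Sum>(x,K)\<in>p. f (Sup K) - f (Inf K))"
        using additive_tagged_division_1[OF _ ptag, of f] ab by simp
      have ba: "(\<Sum>(x,K)\<in>p. measure lborel K) = b - a"
      proof -
        have "(\<Sum>(x,K)\<in>p. Sup K - Inf K) = b - a"
          using additive_tagged_division_1[OF _ ptag, of "\<lambda>x. x"] ab by simp
        moreover have "(\<Sum>(x,K)\<in>p. measure lborel K) = (\<Sum>(x,K)\<in>p. Sup K - Inf K)"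
          by (rule sum.cong) (auto elim: tag_interval[OF ptag])
        ultimately show ?thesis by simp
      qed
      have cnn: "\<And>z. z \<in> p \<Longrightarrow> 0 \<le> (\<lambda>(x,K). measure lborel K) z" by auto
      define \<Phi> where "\<Phi> = (\<lambda>(x,K). measure lborel K * g0 x - (f (Sup K) - f (Inf K)))"
      have eqs: "sum (\<lambda>(x,k). measure lborel k *\<^sub>R g0 x) p - (f b - f a) = sum \<Phi> p"
        unfolding fb \<Phi>_def by (simp add: split_beta sum_subtractf)
      define pE where "pE = p \<inter> {z. fst z \<in> E}"
      have split: "sum \<Phi> p = sum \<Phi> pE + sum \<Phi> (p - pE)"
      proof -
        have "p - pE = p - {z. fst z \<in> E}" unfolding pE_def by blast
        then show ?thesis unfolding pE_def using sum.Int_Diff[OF finp, of \<Phi> "{z. fst z \<in> E}"] by simp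
      qed
      have D: "\<bar>sum \<Phi> (p - pE)\<bar> \<le> e/2 * (b - a)"
      proof -
        have "\<bar>sum \<Phi> (p - pE)\<bar> \<le> (\<Sum>z\<in>p - pE. e/2 * (\<lambda>(x,K). measure lborel K) z)"
        proof (rule sum_abs_ge_zero[THEN order_trans[rotated]] | rule order_trans[OF sum_abs], rule sum_mono)
          fix z assume z: "z \<in> p - pE"
          obtain x K where zx: "z = (x,K)" by fastforce
          have xK: "(x,K) \<in> p" "x \<notin> E" using z zx pE_def by auto
          obtain u v where K: "K = {u..v}" "u \<le> v" "x \<in> K" "K \<subseteq> {a..b}" "Inf K = u" "Sup K = v" "measure lborel K = v - u"
            using tag_interval[OF ptag xK(1)] by blast
          have xab: "x \<in> {a..b} - E" using K xK by auto
          have ball: "K \<subseteq> ball x (d x)" using finep xK(1) by (auto simp: fine_def)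
          have "u \<in> K" "v \<in> K" using K by auto
          then have "u \<in> ball x (d x)" "v \<in> ball x (d x)" using ball by blast+
          then have uv: "\<bar>u - x\<bar> < d x" "\<bar>v - x\<bar> < d x" by (auto simp: dist_real_def)
          have "\<bar>(v - u) * g x - (f v - f u)\<bar> \<le> \<bar>f v - f x - (v - x) * g x\<bar> + \<bar>f u - f x - (u - x) * g x\<bar>"
          proof -
            have "(v - u) * g x - (f v - f u) = (f u - f x - (u - x) * g x) - (f v - f x - (v - x) * g x)"
              by (simp add: algebra_simps)
            then show ?thesis using abs_triangle_ineq4[of "f u - f x - (u - x) * g x" "f v - f x - (v - x) * g x"]
              by linarith
          qed
          also have "\<dots> \<le> e/2 * \<bar>v - x\<bar> + e/2 * \<bar>u - x\<bar>"
            using dD[OF xab uv(1)] dD[OF xab uv(2)] by simp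
          also have "\<dots> = e/2 * (v - u)"
          proof -
            have "\<bar>v - x\<bar> = v - x" "\<bar>u - x\<bar> = x - u" using K by auto
            then show ?thesis by (simp add: field_simps)
          qed
          finally show "\<bar>\<Phi> z\<bar> \<le> e/2 * (\<lambda>(x,K). measure lborel K) z"
            using xK K by (simp add: \<Phi>_def zx g0_def mult.commute)
        qed
        also have "\<dots> \<le> (\<Sum>z\<in>p. e/2 * (\<lambda>(x,K). measure lborel K) z)"
          by (rule sum_mono2[OF finp]) (use e cnn in auto)
        also have "\<dots> = e/2 * (\<Sum>z\<in>p. (\<lambda>(x,K). measure lborel K) z)" by (rule sum_distrib_left[symmetric])
        also have "\<dots> = e/2 * (b - a)" using ba by simp
        finally show ?thesis .
      qed
      define pE' where "pE' = {z \<in> pE. Inf (snd z) < Sup (snd z)}"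
      define S where "S = (\<lambda>(x,K). (Inf K, Sup K)) ` pE'"
      have finpE': "finite pE'" using finp unfolding pE'_def pE_def by auto
      have inj: "inj_on (\<lambda>(x,K). (Inf K, Sup K)) pE'"
      proof (rule inj_onI)
        fix z z' assume zz: "z \<in> pE'" "z' \<in> pE'" "(\<lambda>(x,K). (Inf K, Sup K)) z = (\<lambda>(x,K). (Inf K, Sup K)) z'"
        obtain x K where zx: "z = (x,K)" by fastforce
        obtain x' K' where zx': "z' = (x',K')" by fastforce
        have in1: "(x,K) \<in> p" "(x',K') \<in> p" using zz zx zx' pE'_def pE_def by auto
        obtain u v where K: "K = {u..v}" "Inf K = u" "Sup K = v"
          using tag_interval[OF ptag in1(1)] by metis
        obtain u' v' where K': "K' = {u'..v'}" "Inf K' = u'" "Sup K' = v'"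
          using tag_interval[OF ptag in1(2)] by metis
        have "u = u'" "v = v'" using zz(3) zx zx' K K' by auto
        then have KK: "K = K'" using K K' by simp
        have uv: "u < v" using zz(1) zx K pE'_def by auto
        show "z = z'"
        proof (rule ccontr)
          assume "z \<noteq> z'"
          then have "interior K \<inter> interior K' = {}"
            using tagged_division_ofD(5)[OF ptag in1] zx zx' by auto
          then show False using KK K uv by (auto dest: dense)
        qed
      qed
      have E1: "\<bar>sum \<Phi> pE\<bar> \<le> (\<Sum>(u,v)\<in>S. \<bar>f v - f u\<bar>)"
      proof -
        have "\<bar>sum \<Phi> pE\<bar> \<le> (\<Sum>z\<in>pE. \<bar>\<Phi> z\<bar>)" by (rule sum_abs)
        also have "\<dots> = (\<Sum>z\<in>pE'. \<bar>\<Phi> z\<bar>)"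
        proof (rule sum.mono_neutral_right)
          show "finite pE" using finp pE_def by auto
          show "pE' \<subseteq> pE" using pE'_def by auto
          show "\<forall>z\<in>pE - pE'. \<bar>\<Phi> z\<bar> = 0"
          proof
            fix z assume z: "z \<in> pE - pE'"
            obtain x K where zx: "z = (x,K)" by fastforce
            have "(x,K) \<in> p" "x \<in> E" using z zx pE_def by auto
            then obtain u v where K: "K = {u..v}" "u \<le> v" "Inf K = u" "Sup K = v" "measure lborel K = v - u"
              using tag_interval[OF ptag] by metis
            have "u = v" using K z zx pE'_def by auto
            then show "\<bar>\<Phi> z\<bar> = 0" using K \<open>x \<in> E\<close> by (simp add: \<Phi>_def zx g0_def)
          qed
        qed
        also have "\<dots> = (\<Sum>z\<in>pE'. (\<lambda>(u,v). \<bar>f v - f u\<bar>) ((\<lambda>(x,K). (Inf K, Sup K)) z))"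
          by (rule sum.cong) (auto simp: \<Phi>_def g0_def pE'_def pE_def abs_minus_commute)
        also have "\<dots> = (\<Sum>(u,v)\<in>S. \<bar>f v - f u\<bar>)"
          unfolding S_def by (subst sum.reindex[OF inj]) (simp add: comp_def)
        finally show ?thesis .
      qed
      have Sprop: "\<forall>(u,v)\<in>S. a \<le> u \<and> u \<le> v \<and> v \<le> b \<and> {u..v} \<subseteq> T"
      proof (clarsimp simp: S_def)
        fix x K assume "(x,K) \<in> pE'"
        then have xK: "(x,K) \<in> p" "x \<in> E" using pE'_def pE_def by auto
        obtain u v where K: "K = {u..v}" "u \<le> v" "x \<in> K" "K \<subseteq> {a..b}" "Inf K = u" "Sup K = v"
          using tag_interval[OF ptag xK(1)] by metis
        have "K \<subseteq> ball x (d x)" using finep xK(1) by (auto simp: fine_def)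
        then have "K \<subseteq> T" using dE[OF xK(2)] by blast
        then show "a \<le> Inf K \<and> Inf K \<le> Sup K \<and> Sup K \<le> b \<and> {Inf K..Sup K} \<subseteq> T" using K by auto
      qed
      have Sdis0: "Sup K \<le> Inf K' \<or> Sup K' \<le> Inf K"
        if z: "(x,K) \<in> pE'" "(x',K') \<in> pE'" and ne: "(Inf K, Sup K) \<noteq> (Inf K', Sup K')" for x K x' K'
      proof -
        have in1: "(x,K) \<in> p" "(x',K') \<in> p" using z pE'_def pE_def by auto
        obtain u v where K: "K = {u..v}" "Inf K = u" "Sup K = v"
          using tag_interval[OF ptag in1(1)] by metis
        obtain u' v' where K': "K' = {u'..v'}" "Inf K' = u'" "Sup K' = v'"
          using tag_interval[OF ptag in1(2)] by metis
        have "(x,K) \<noteq> (x',K')" using ne by auto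
        then have int: "{u<..<v} \<inter> {u'<..<v'} = {}"
          using tagged_division_ofD(5)[OF ptag in1] K K' by auto
        have "u < v" "u' < v'" using z K K' pE'_def by auto
        have "v \<le> u' \<or> v' \<le> u"
        proof (rule ccontr)
          assume "\<not> (v \<le> u' \<or> v' \<le> u)"
          then have "(max u u' + min v v')/2 \<in> {u<..<v} \<inter> {u'<..<v'}"
            using \<open>u < v\<close> \<open>u' < v'\<close> by auto
          then show False using int by blast
        qed
        then show "Sup K \<le> Inf K' \<or> Sup K' \<le> Inf K" using K K' by simp
      qed
      have Sdis: "\<forall>(u,v)\<in>S. \<forall>(u',v')\<in>S. (u,v) \<noteq> (u',v') \<longrightarrow> v \<le> u' \<or> v' \<le> u"
        unfolding S_def using Sdis0 by fastforce
      have finS: "finite S" using finpE' S_def by simp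
      have "(\<Sum>(u,v)\<in>S. v - u) \<le> measure lebesgue T"
        by (rule sum_intervals_le_measure[OF finS _ Sdis Tm]) (use Sprop in auto)
      then have "(\<Sum>(u,v)\<in>S. \<bar>f v - f u\<bar>) < e * (b - a) / 2"
        using ACS[OF finS _ Sdis] Sprop T\<delta> by fastforce
      then have "\<bar>sum \<Phi> pE\<bar> \<le> e * (b - a) / 2" using E1 by simp
      then have "\<bar>sum \<Phi> p\<bar> \<le> e * (b - a)" using D split by simp
      then show "norm (sum (\<lambda>(x,k). measure lborel k *\<^sub>R g0 x) p - (f b - f a)) \<le> e * measure lborel {a..b}"
        using eqs ab by simp
    qed
  qed
  then show ?thesis
    by (rule has_integral_spike[OF E, rotated]) (simp add: g0_def)
qed



lemma ae_negl:
  fixes a b :: real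
  assumes "AE x in lebesgue_on {a..b}. P x"
  obtains E where "negligible E" "\<And>x. x \<in> {a..b} - E \<Longrightarrow> P x"
proof -
  obtain N where N: "\<And>x. x \<in> space (lebesgue_on {a..b}) - N \<Longrightarrow> P x" "N \<in> null_sets (lebesgue_on {a..b})"
    using AE_E3[OF assms] by blast
  have ab: "{a..b} \<in> sets lebesgue" using lmeasurable_interval(1)[of a b] fmeasurableD by blast
  have "N \<in> null_sets lebesgue" using N(2) null_sets_restrict_space[OF ab, of N] by blast
  then show ?thesis using that[of N] N(1) by (auto simp: negligible_iff_null_sets)
qed

lemma ac_mult_linear:
  assumes ac: "abs_continuous_on a b f" and ab: "a \<le> b"
  shows "abs_continuous_on a b (\<lambda>x. (x - c) * f x)"
proof -
  have "continuous_on {a..b} f" by (rule ac_cont[OF ac])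
  then have "compact (f ` {a..b})" by (rule compact_continuous_image) simp
  then have "bounded (f ` {a..b})" by (rule compact_imp_bounded)
  then obtain M where M: "\<And>x. x \<in> {a..b} \<Longrightarrow> \<bar>f x\<bar> \<le> M" unfolding bounded_real by blast
  have M0: "M \<ge> 0" using M[of a] ab by auto
  define K where "K = \<bar>a - c\<bar> + \<bar>b - c\<bar>"
  have K: "\<bar>y - c\<bar> \<le> K" if "a \<le> y" "y \<le> b" for y
    unfolding K_def using that by linarith
  have K0: "K \<ge> 0" unfolding K_def by simp
  show ?thesis unfolding abs_continuous_on_def
  proof (intro allI impI)
    fix \<epsilon> :: real assume \<epsilon>: "\<epsilon> > 0"
    have \<epsilon>1: "\<epsilon> / (2 * (K + 1)) > 0" using \<epsilon> K0 by simp
    obtain d where d: "d > 0" and H0: "\<forall>(n::nat) X Y. (\<forall>i<n. a \<le> X i \<and> X i \<le> Y i \<and> Y i \<le> b) \<and>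
        (\<forall>i<n. \<forall>j<n. i \<noteq> j \<longrightarrow> Y i \<le> X j \<or> Y j \<le> X i) \<and>
        (\<Sum>i<n. Y i - X i) < d \<longrightarrow> (\<Sum>i<n. \<bar>f (Y i) - f (X i)\<bar>) < \<epsilon> / (2 * (K + 1))"
      using ac[unfolded abs_continuous_on_def, rule_format, OF \<epsilon>1] by blast
    note H = H0[rule_format]
    define \<delta> where "\<delta> = min d (\<epsilon> / (2 * (M + 1)))"
    have \<delta>0: "\<delta> > 0" using d \<epsilon> M0 by (simp add: \<delta>_def)
    show "\<exists>\<delta>>0. \<forall>(n::nat) x y. (\<forall>i<n. a \<le> x i \<and> x i \<le> y i \<and> y i \<le> b) \<and>
        (\<forall>i<n. \<forall>j<n. i \<noteq> j \<longrightarrow> y i \<le> x j \<or> y j \<le> x i) \<and>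
        (\<Sum>i<n. y i - x i) < \<delta> \<longrightarrow> (\<Sum>i<n. \<bar>(y i - c) * f (y i) - (x i - c) * f (x i)\<bar>) < \<epsilon>"
    proof (intro exI[of _ \<delta>] conjI allI impI \<delta>0)
      fix n :: nat and X Y assume A: "(\<forall>i<n. a \<le> X i \<and> X i \<le> Y i \<and> Y i \<le> b) \<and>
        (\<forall>i<n. \<forall>j<n. i \<noteq> j \<longrightarrow> Y i \<le> X j \<or> Y j \<le> X i) \<and> (\<Sum>i<n. Y i - X i) < \<delta>"
      have s1: "(\<Sum>i<n. \<bar>f (Y i) - f (X i)\<bar>) < \<epsilon> / (2 * (K + 1))"
        using A by (intro H) (auto simp: \<delta>_def)
      have s2: "(\<Sum>i<n. Y i - X i) < \<epsilon> / (2 * (M + 1))" using A by (auto simp: \<delta>_def)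
      have s3: "(\<Sum>i<n. Y i - X i) \<ge> 0" using A by (intro sum_nonneg) auto
      have pt: "\<bar>(Y i - c) * f (Y i) - (X i - c) * f (X i)\<bar> \<le> K * \<bar>f (Y i) - f (X i)\<bar> + M * (Y i - X i)"
        if i: "i < n" for i
      proof -
        have iv: "a \<le> X i" "X i \<le> Y i" "Y i \<le> b" using A i by auto
        have "(Y i - c) * f (Y i) - (X i - c) * f (X i) = (Y i - c) * (f (Y i) - f (X i)) + (Y i - X i) * f (X i)"
          by (simp add: algebra_simps)
        also have "\<bar>\<dots>\<bar> \<le> \<bar>Y i - c\<bar> * \<bar>f (Y i) - f (X i)\<bar> + (Y i - X i) * \<bar>f (X i)\<bar>"
          using iv by (simp add: abs_mult abs_triangle_ineq[THEN order_trans])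
        also have "\<dots> \<le> K * \<bar>f (Y i) - f (X i)\<bar> + (Y i - X i) * M"
          using iv K[of "Y i"] M[of "X i"] by (intro add_mono mult_mono) auto
        finally show ?thesis by (simp add: mult.commute)
      qed
      have "(\<Sum>i<n. \<bar>(Y i - c) * f (Y i) - (X i - c) * f (X i)\<bar>) \<le> (\<Sum>i<n. K * \<bar>f (Y i) - f (X i)\<bar> + M * (Y i - X i))"
        by (rule sum_mono) (use pt in auto)
      also have "\<dots> = K * (\<Sum>i<n. \<bar>f (Y i) - f (X i)\<bar>) + M * (\<Sum>i<n. Y i - X i)"
        by (simp add: sum.distrib sum_distrib_left)
      also have "\<dots> < \<epsilon>/2 + \<epsilon>/2"
      proof -
        have "K * (\<Sum>i<n. \<bar>f (Y i) - f (X i)\<bar>) \<le> K * (\<epsilon> / (2 * (K + 1)))"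
          using s1 K0 by (intro mult_left_mono) auto
        also have "\<dots> < \<epsilon>/2" using K0 \<epsilon> by (simp add: field_simps)
        finally have A1: "K * (\<Sum>i<n. \<bar>f (Y i) - f (X i)\<bar>) < \<epsilon>/2" .
        have "M * (\<Sum>i<n. Y i - X i) \<le> M * (\<epsilon> / (2 * (M + 1)))"
          using s2 M0 by (intro mult_left_mono) auto
        also have "\<dots> \<le> \<epsilon>/2" using M0 \<epsilon> by (simp add: field_simps)
        finally have A2: "M * (\<Sum>i<n. Y i - X i) \<le> \<epsilon>/2" .
        show ?thesis using add_less_le_mono[OF A1 A2] .
      qed
      finally show "(\<Sum>i<n. \<bar>(Y i - c) * f (Y i) - (X i - c) * f (X i)\<bar>) < \<epsilon>" by simp
    qed
  qed
qed

lemma E1_repr: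
  fixes f g :: "real \<Rightarrow> real"
  assumes ab: "a < b" and ac: "abs_continuous_on a b f"
    and der: "AE x in lebesgue_on {a..b}. (f has_real_derivative g x) (at x)"
  shows "((\<lambda>x. (x - (a+b)/2) * g x) has_integral - E1 a b f) {a..b}"
proof -
  obtain E where E: "negligible E" "\<And>x. x \<in> {a..b} - E \<Longrightarrow> (f has_real_derivative g x) (at x)"
    using ae_negl[OF der] by blast
  define m where "m = (a+b)/2"
  define h where "h x = (x - m) * f x" for x
  have ach: "abs_continuous_on a b h" unfolding h_def by (rule ac_mult_linear) (use ac ab in auto)
  have dh: "(h has_real_derivative (f x + (x - m) * g x)) (at x)" if "x \<in> {a..b} - E" for x
    unfolding h_def using E(2)[OF that] by (auto intro!: derivative_eq_intros)
  have I1: "((\<lambda>x. f x + (x - m) * g x) has_integral (h b - h a)) {a..b}"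
    by (rule ac_ftc[OF ab ach E(1) dh])
  have I2: "(f has_integral integral {a..b} f) {a..b}"
    using integrable_continuous_interval[OF ac_cont[OF ac]] by (simp add: integrable_integral)
  have "((\<lambda>x. (f x + (x - m) * g x) - f x) has_integral (h b - h a - integral {a..b} f)) {a..b}"
    by (rule has_integral_diff[OF I1 I2])
  moreover have "h b - h a - integral {a..b} f = - E1 a b f"
    unfolding h_def E1_def m_def by (simp add: field_simps)
  ultimately show ?thesis by (simp add: m_def)
qed



lemma cont_abs_powr:
  fixes m r :: real assumes "r > 0"
  shows "continuous_on S (\<lambda>x. \<bar>x - m\<bar> powr r)"
  by (rule continuous_on_powr') (use assms in \<open>auto intro!: continuous_intros\<close>)

lemma int_abs_powr:
  fixes a b r :: real assumes ab: "a < b" and r: "r > 0"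
  shows "((\<lambda>x. \<bar>x - (a+b)/2\<bar> powr r) has_integral 2 * ((b-a)/2) powr (r+1) / (r+1)) {a..b}"
proof -
  define m where "m = (a+b)/2"
  define F where "F x = (x - m) * \<bar>x - m\<bar> powr r / (r+1)" for x
  have "((\<lambda>x. \<bar>x - m\<bar> powr r) has_integral (F b - F a)) {a..b}"
  proof (rule fundamental_theorem_of_calculus_strong[of "{m}"])
    show "continuous_on {a..b} F" unfolding F_def
      by (intro continuous_intros cont_abs_powr r) (use r in auto)
    fix x assume x: "x \<in> {a..b} - {m}"
    show "(F has_vector_derivative \<bar>x - m\<bar> powr r) (at x)"
      unfolding has_real_derivative_iff_has_vector_derivative[symmetric]
    proof (cases "x > m")
      case True
      have d0: "((\<lambda>y. (y - m) powr (r+1)) has_real_derivative (r+1) * (x - m) powr r) (at x)"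
        using True r by (auto intro!: derivative_eq_intros)
      have d: "((\<lambda>y. (y - m) powr (r+1) / (r+1)) has_real_derivative (x - m) powr r) (at x)"
        using DERIV_cdivide[OF d0, of "r+1"] r by simp
      show "(F has_real_derivative \<bar>x - m\<bar> powr r) (at x)"
      proof (rule has_field_derivative_transform_within_open[of _ _ _ "{m<..}"])
        show "((\<lambda>y. (y - m) powr (r+1) / (r+1)) has_real_derivative \<bar>x - m\<bar> powr r) (at x)"
          using d True by simp
        fix y :: real assume "y \<in> {m<..}"
        then show "(y - m) powr (r+1) / (r+1) = F y"
          by (simp add: F_def powr_add)
      qed (use True in auto)
    next
      case False
      then have xm: "x < m" using x by auto
      have d0: "((\<lambda>y. (m - y) powr (r+1)) has_real_derivative (r+1) * (m - x) powr r * (-1)) (at x)"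
        using xm r by (auto intro!: derivative_eq_intros)
      have d: "((\<lambda>y. - ((m - y) powr (r+1) / (r+1))) has_real_derivative (m - x) powr r) (at x)"
        using DERIV_minus[OF DERIV_cdivide[OF d0, of "r+1"]] r by simp
      show "(F has_real_derivative \<bar>x - m\<bar> powr r) (at x)"
      proof (rule has_field_derivative_transform_within_open[of _ _ _ "{..<m}"])
        show "((\<lambda>y. - ((m - y) powr (r+1) / (r+1))) has_real_derivative \<bar>x - m\<bar> powr r) (at x)"
          using d xm by (simp add: abs_minus_commute)
        fix y :: real assume "y \<in> {..<m}"
        then have e1: "\<bar>y - m\<bar> = m - y" and e2: "(m - y) powr (r+1) = (m - y) * (m - y) powr r"
          by (auto simp: powr_add)
        have e3: "(y - m) * (m-y) powr r = - ((m - y) * (m - y) powr r)" by (simp add: algebra_simps)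
        show "- ((m - y) powr (r+1) / (r+1)) = F y"
          unfolding F_def e1 e2 e3 by simp
      qed (use xm in auto)
    qed
  qed (use ab in auto)
  moreover have "F b - F a = 2 * ((b-a)/2) powr (r+1) / (r+1)"
  proof -
    define h where "h = (b-a)/2"
    have hh: "b - m = h" "a - m = - h" "h > 0" using ab by (auto simp: m_def h_def field_simps)
    have hp: "h powr (r+1) = h * h powr r" using hh(3) by (simp add: powr_add)
    have "F b - F a = (h * h powr r + h * h powr r) / (r+1)"
      unfolding F_def hh(1,2) using hh(3) by (simp add: diff_divide_distrib[symmetric])
    then show ?thesis unfolding h_def[symmetric] hp by simp
  qed
  ultimately show ?thesis by (simp add: m_def)
qed

lemma int_abs_powr_L:
  fixes a b r :: real assumes ab: "a < b" and r: "r > 0"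
  shows "integrable (lebesgue_on {a..b}) (\<lambda>x. \<bar>x - (a+b)/2\<bar> powr r)"
    and "integral\<^sup>L (lebesgue_on {a..b}) (\<lambda>x. \<bar>x - (a+b)/2\<bar> powr r) = 2 * ((b-a)/2) powr (r+1) / (r+1)"
proof -
  show i: "integrable (lebesgue_on {a..b}) (\<lambda>x. \<bar>x - (a+b)/2\<bar> powr r)"
    by (rule continuous_imp_integrable_real[OF cont_abs_powr[OF r]])
  show "integral\<^sup>L (lebesgue_on {a..b}) (\<lambda>x. \<bar>x - (a+b)/2\<bar> powr r) = 2 * ((b-a)/2) powr (r+1) / (r+1)"
    using lebesgue_integral_eq_integral[OF i] int_abs_powr[OF ab r] by (simp add: integral_unique)
qed



lemma holder_special:
  fixes u v :: "'a \<Rightarrow> real" and P Q :: real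
  assumes P: "P > 1" and Q: "Q > 1" and PQ: "1/P + 1/Q = 1"
   and um: "u \<in> borel_measurable M" and vm: "v \<in> borel_measurable M"
   and u0: "\<And>x. u x \<ge> 0" and v0: "\<And>x. v x \<ge> 0"
   and ui: "integrable M (\<lambda>x. u x powr Q)" and vi: "integrable M (\<lambda>x. v x powr P)"
   and A: "integral\<^sup>L M (\<lambda>x. u x powr Q) > 0"
  shows "integrable M (\<lambda>x. u x * v x) \<and> integral\<^sup>L M (\<lambda>x. u x * v x)
     \<le> (integral\<^sup>L M (\<lambda>x. u x powr Q)) powr (1/Q) * (integral\<^sup>L M (\<lambda>x. v x powr P)) powr (1/P)"
proof -
  define IA where "IA = integral\<^sup>L M (\<lambda>x. u x powr Q)"
  define IB where "IB = integral\<^sup>L M (\<lambda>x. v x powr P)"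
  have B0: "IB \<ge> 0" unfolding IB_def by (rule integral_nonneg_AE) simp
  have meas: "(\<lambda>x. u x * v x) \<in> borel_measurable M" using um vm by measurable
  show ?thesis
  proof (cases "IB = 0")
    case True
    have "AE x in M. v x powr P = 0"
      using integral_nonneg_eq_0_iff_AE[OF vi] True unfolding IB_def by simp
    then have ae: "AE x in M. u x * v x = 0" by eventually_elim simp
    have int: "integrable M (\<lambda>x. u x * v x)"
      using integrable_cong_AE[OF meas _ ae] by simp
    have "integral\<^sup>L M (\<lambda>x. u x * v x) = 0"
      using integral_cong_AE[OF meas _ ae] by simp
    then show ?thesis using int True unfolding IA_def[symmetric] IB_def[symmetric] by simp
  next
    case False
    then have B: "IB > 0" using B0 by simp
    have A': "IA > 0" using A IA_def by simp
    define \<alpha> where "\<alpha> = IA powr (1/Q)"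
    define \<beta> where "\<beta> = IB powr (1/P)"
    have \<alpha>0: "\<alpha> > 0" and \<beta>0: "\<beta> > 0" using A' B by (auto simp: \<alpha>_def \<beta>_def)
    have \<alpha>Q: "\<alpha> powr Q = IA" using A' Q by (simp add: \<alpha>_def powr_powr)
    have \<beta>P: "\<beta> powr P = IB" using B P by (simp add: \<beta>_def powr_powr)
    have pt: "u x * v x \<le> \<alpha> * \<beta> * (v x powr P / (P * IB) + u x powr Q / (Q * IA))" for x
    proof -
      have "(v x / \<beta>) * (u x / \<alpha>) \<le> (v x / \<beta>) powr P / P + (u x / \<alpha>) powr Q / Q"
        by (rule Youngs_inequality[OF P Q PQ]) (use u0 v0 \<alpha>0 \<beta>0 in auto)
      also have "\<dots> = v x powr P / (P * IB) + u x powr Q / (Q * IA)"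
        by (simp add: powr_divide \<alpha>Q \<beta>P mult.commute)
      finally have "(v x / \<beta>) * (u x / \<alpha>) \<le> v x powr P / (P * IB) + u x powr Q / (Q * IA)" .
      then have "\<alpha> * \<beta> * ((v x / \<beta>) * (u x / \<alpha>)) \<le> \<alpha> * \<beta> * (v x powr P / (P * IB) + u x powr Q / (Q * IA))"
        using \<alpha>0 \<beta>0 by (intro mult_left_mono) auto
      moreover have "\<alpha> * \<beta> * ((v x / \<beta>) * (u x / \<alpha>)) = u x * v x" using \<alpha>0 \<beta>0 by (simp add: field_simps)
      ultimately show ?thesis by simp
    qed
    have ri: "integrable M (\<lambda>x. \<alpha> * \<beta> * (v x powr P / (P * IB) + u x powr Q / (Q * IA)))"
      using ui vi by (intro integrable_mult_right integrable_add integrable_divide) auto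
    have int: "integrable M (\<lambda>x. u x * v x)"
    proof (rule Bochner_Integration.integrable_bound[OF ri meas])
      show "AE x in M. norm (u x * v x) \<le> norm (\<alpha> * \<beta> * (v x powr P / (P * IB) + u x powr Q / (Q * IA)))"
        using pt u0 v0 by (intro AE_I2) (smt (verit, best) mult_nonneg_nonneg real_norm_def)
    qed
    have "integral\<^sup>L M (\<lambda>x. u x * v x) \<le> integral\<^sup>L M (\<lambda>x. \<alpha> * \<beta> * (v x powr P / (P * IB) + u x powr Q / (Q * IA)))"
      by (rule Bochner_Integration.integral_mono[OF int ri pt])
    also have "\<dots> = \<alpha> * \<beta> * (IB / (P * IB) + IA / (Q * IA))"
      using ui vi by (simp add: IA_def IB_def)
    also have "\<dots> = \<alpha> * \<beta>" using A' B PQ by (simp add: field_simps)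
    finally show ?thesis using int unfolding \<alpha>_def \<beta>_def IA_def IB_def by simp
  qed
qed



lemma E1_bound_L:
  fixes f g :: "real \<Rightarrow> real"
  assumes ab: "a < b" and ac: "abs_continuous_on a b f"
    and der: "AE x in lebesgue_on {a..b}. (f has_real_derivative g x) (at x)"
    and int: "integrable (lebesgue_on {a..b}) (\<lambda>x. (x - (a+b)/2) * g x)"
  shows "\<bar>E1 a b f\<bar> \<le> integral\<^sup>L (lebesgue_on {a..b}) (\<lambda>x. \<bar>x - (a+b)/2\<bar> * \<bar>g x\<bar>)"
proof -
  have "integral\<^sup>L (lebesgue_on {a..b}) (\<lambda>x. (x - (a+b)/2) * g x) = integral {a..b} (\<lambda>x. (x - (a+b)/2) * g x)"
    by (rule lebesgue_integral_eq_integral[OF int]) simp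
  also have "\<dots> = - E1 a b f" using E1_repr[OF ab ac der] by (rule integral_unique)
  finally have eq: "integral\<^sup>L (lebesgue_on {a..b}) (\<lambda>x. (x - (a+b)/2) * g x) = - E1 a b f" .
  have "\<bar>E1 a b f\<bar> = \<bar>integral\<^sup>L (lebesgue_on {a..b}) (\<lambda>x. (x - (a+b)/2) * g x)\<bar>" using eq by simp
  also have "\<dots> \<le> integral\<^sup>L (lebesgue_on {a..b}) (\<lambda>x. \<bar>(x - (a+b)/2) * g x\<bar>)" by (rule integral_abs_bound)
  finally show ?thesis by (simp add: abs_mult)
qed

lemma meas_w:
  fixes a b c :: real
  shows "(\<lambda>x. x - c) \<in> borel_measurable (lebesgue_on {a..b})"
    and "(\<lambda>x. \<bar>x - c\<bar>) \<in> borel_measurable (lebesgue_on {a..b})"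
  by (rule continuous_imp_measurable_on_sets_lebesgue, intro continuous_intros,
      use lmeasurable_interval(1)[of a b] fmeasurableD in blast)+

lemma meas_wg:
  fixes g :: "real \<Rightarrow> real"
  assumes "g \<in> borel_measurable (lebesgue_on {a..b})"
  shows "(\<lambda>x. (x - c) * g x) \<in> borel_measurable (lebesgue_on {a..b})"
    and "(\<lambda>x. \<bar>x - c\<bar> * \<bar>g x\<bar>) \<in> borel_measurable (lebesgue_on {a..b})"
  using assms meas_w[of c a b] by measurable

lemma ae_in:
  fixes a b :: real
  shows "AE x in lebesgue_on {a..b}. x \<in> {a..b}"
  using AE_space[of "lebesgue_on {a..b}"] by simp

lemma absdiff_le:
  fixes a b x :: real
  assumes "x \<in> {a..b}"
  shows "\<bar>x - (a+b)/2\<bar> \<le> (b-a)/2"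
  using assms by (auto simp: abs_le_iff field_simps)

lemma bound_p1:
  fixes f g :: "real \<Rightarrow> real"
  assumes ab: "a < b" and ac: "abs_continuous_on a b f"
    and der: "AE x in lebesgue_on {a..b}. (f has_real_derivative g x) (at x)"
    and mem: "memLp 1 a b g"
  shows "\<bar>E1 a b f\<bar> \<le> trap_coeff 1 \<infinity> * Lp_norm 1 a b g * (b - a) powr trap_expo 1 \<infinity>"
proof -
  let ?M = "lebesgue_on {a..b}"
  have gm: "g \<in> borel_measurable ?M" and gi: "integrable ?M (\<lambda>x. \<bar>g x\<bar>)"
    using mem by (auto simp: memLp_def)
  have N: "Lp_norm 1 a b g = integral\<^sup>L ?M (\<lambda>x. \<bar>g x\<bar>)"
    by (simp add: Lp_norm_def integral_nonneg_AE)
  define h where "h = (b-a)/2"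
  have ri: "integrable ?M (\<lambda>x. h * \<bar>g x\<bar>)" using gi by simp
  have int: "integrable ?M (\<lambda>x. (x - (a+b)/2) * g x)"
  proof (rule Bochner_Integration.integrable_bound[OF ri meas_wg(1)[OF gm]])
    show "AE x in ?M. norm ((x - (a+b)/2) * g x) \<le> norm (h * \<bar>g x\<bar>)"
      using ae_in
    proof eventually_elim
      case (elim x)
      then have "\<bar>x - (a+b)/2\<bar> \<le> h" using absdiff_le[of x a b] h_def by simp
      moreover have "h \<ge> 0" using ab h_def by simp
      ultimately show ?case by (simp add: abs_mult mult_right_mono)
    qed
  qed
  have "\<bar>E1 a b f\<bar> \<le> integral\<^sup>L ?M (\<lambda>x. \<bar>x - (a+b)/2\<bar> * \<bar>g x\<bar>)"
    by (rule E1_bound_L[OF ab ac der int])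
  also have "\<dots> \<le> integral\<^sup>L ?M (\<lambda>x. h * \<bar>g x\<bar>)"
  proof (rule Bochner_Integration.integral_mono)
    show "integrable ?M (\<lambda>x. \<bar>x - (a+b)/2\<bar> * \<bar>g x\<bar>)"
      using integrable_abs[OF int] by (simp add: abs_mult)
    show "integrable ?M (\<lambda>x. h * \<bar>g x\<bar>)" by (rule ri)
    fix x assume "x \<in> space ?M"
    then have "x \<in> {a..b}" by simp
    then show "\<bar>x - (a+b)/2\<bar> * \<bar>g x\<bar> \<le> h * \<bar>g x\<bar>"
      unfolding h_def by (intro mult_right_mono absdiff_le) auto
  qed
  also have "\<dots> = trap_coeff 1 \<infinity> * Lp_norm 1 a b g * (b - a) powr trap_expo 1 \<infinity>"
    using ab by (simp add: N h_def trap_coeff_def trap_expo_def)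
  finally show ?thesis .
qed

lemma ess_bound:
  fixes g :: "real \<Rightarrow> real"
  assumes mem: "memLp \<infinity> a b g"
  shows "AE x in lebesgue_on {a..b}. \<bar>g x\<bar> \<le> Lp_norm \<infinity> a b g"
    and "Lp_norm \<infinity> a b g \<ge> 0"
proof -
  let ?M = "lebesgue_on {a..b}"
  define S where "S = {C. 0 \<le> C \<and> (AE x in ?M. \<bar>g x\<bar> \<le> C)}"
  have N: "Lp_norm \<infinity> a b g = Inf S" by (simp add: Lp_norm_def S_def)
  obtain C0 where "AE x in ?M. \<bar>g x\<bar> \<le> C0" using mem by (auto simp: memLp_def)
  then have "max C0 0 \<in> S" unfolding S_def by (auto elim: eventually_mono)
  then have ne: "S \<noteq> {}" by blast
  have bdd: "bdd_below S" unfolding S_def by (rule bdd_belowI[of _ 0]) auto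
  show "Lp_norm \<infinity> a b g \<ge> 0" unfolding N using ne by (rule cInf_greatest) (auto simp: S_def)
  have "AE x in ?M. \<bar>g x\<bar> \<le> Inf S + 1 / Suc n" for n
  proof -
    have "Inf S < Inf S + 1 / Suc n" by simp
    then obtain C where "C \<in> S" "C < Inf S + 1 / Suc n" using cInf_less_iff[OF ne bdd] by blast
    then show ?thesis unfolding S_def by (auto elim: eventually_mono)
  qed
  then have "AE x in ?M. \<forall>n. \<bar>g x\<bar> \<le> Inf S + 1 / Suc n" by (simp add: AE_all_countable)
  then show "AE x in ?M. \<bar>g x\<bar> \<le> Lp_norm \<infinity> a b g"
  proof eventually_elim
    case (elim x)
    show ?case
    proof (rule ccontr)
      assume "\<not> \<bar>g x\<bar> \<le> Lp_norm \<infinity> a b g"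
      then have "\<bar>g x\<bar> - Inf S > 0" using N by simp
      then obtain n where "inverse (real (Suc n)) < \<bar>g x\<bar> - Inf S" using reals_Archimedean by blast
      then show False using elim[rule_format, of n] by (simp add: field_simps)
    qed
  qed
qed

lemma bound_pinf:
  fixes f g :: "real \<Rightarrow> real"
  assumes ab: "a < b" and ac: "abs_continuous_on a b f"
    and der: "AE x in lebesgue_on {a..b}. (f has_real_derivative g x) (at x)"
    and mem: "memLp \<infinity> a b g"
  shows "\<bar>E1 a b f\<bar> \<le> trap_coeff \<infinity> 1 * Lp_norm \<infinity> a b g * (b - a) powr trap_expo \<infinity> 1"
proof -
  let ?M = "lebesgue_on {a..b}"
  define N where "N = Lp_norm \<infinity> a b g"
  have gm: "g \<in> borel_measurable ?M" using mem by (auto simp: memLp_def)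
  have aeN: "AE x in ?M. \<bar>g x\<bar> \<le> N" and N0: "N \<ge> 0" using ess_bound[OF mem] by (auto simp: N_def)
  define h where "h = (b-a)/2"
  have h0: "h > 0" using ab by (simp add: h_def)
  have wi: "integrable ?M (\<lambda>x. \<bar>x - (a+b)/2\<bar>)" and wI: "integral\<^sup>L ?M (\<lambda>x. \<bar>x - (a+b)/2\<bar>) = h^2"
    using int_abs_powr_L[OF ab, of 1] h0 by (auto simp: h_def powr_numeral)
  have ri: "integrable ?M (\<lambda>x. \<bar>x - (a+b)/2\<bar> * N)" using wi by simp
  have int: "integrable ?M (\<lambda>x. (x - (a+b)/2) * g x)"
  proof (rule Bochner_Integration.integrable_bound[OF ri meas_wg(1)[OF gm]])
    show "AE x in ?M. norm ((x - (a+b)/2) * g x) \<le> norm (\<bar>x - (a+b)/2\<bar> * N)"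
      using aeN by eventually_elim (use N0 in \<open>auto simp: abs_mult intro!: mult_left_mono\<close>)
  qed
  have "\<bar>E1 a b f\<bar> \<le> integral\<^sup>L ?M (\<lambda>x. \<bar>x - (a+b)/2\<bar> * \<bar>g x\<bar>)"
    by (rule E1_bound_L[OF ab ac der int])
  also have "\<dots> \<le> integral\<^sup>L ?M (\<lambda>x. \<bar>x - (a+b)/2\<bar> * N)"
  proof (rule integral_mono_AE)
    show "integrable ?M (\<lambda>x. \<bar>x - (a+b)/2\<bar> * \<bar>g x\<bar>)"
      using integrable_abs[OF int] by (simp add: abs_mult)
    show "integrable ?M (\<lambda>x. \<bar>x - (a+b)/2\<bar> * N)" by (rule ri)
    show "AE x in ?M. \<bar>x - (a+b)/2\<bar> * \<bar>g x\<bar> \<le> \<bar>x - (a+b)/2\<bar> * N"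
      using aeN by eventually_elim (auto intro!: mult_left_mono)
  qed
  also have "\<dots> = N * h^2" using wI by simp
  also have "\<dots> = trap_coeff \<infinity> 1 * Lp_norm \<infinity> a b g * (b - a) powr trap_expo \<infinity> 1"
    using ab by (simp add: N_def h_def trap_coeff_def trap_expo_def power2_eq_square field_simps)
  finally show ?thesis .
qed

lemma const_eq:
  fixes h Q :: real assumes h: "h > 0" and Q: "Q > 0"
  shows "(2 * h powr (Q+1) / (Q+1)) powr (1/Q) = 1/2 * (1/(Q+1)) powr (1/Q) * (2*h) powr (1 + 1/Q)"
proof -
  have "(2 * h powr (Q+1) / (Q+1)) powr (1/Q) = (2 * h powr (Q+1)) powr (1/Q) / (Q+1) powr (1/Q)"
    by (rule powr_divide)
  also have "(2 * h powr (Q+1)) powr (1/Q) = 2 powr (1/Q) * (h powr (Q+1)) powr (1/Q)"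
    using h by (simp add: powr_mult)
  also have "2 powr (1/Q) * (h powr (Q+1)) powr (1/Q) / (Q+1) powr (1/Q) 
     = 2 powr (1/Q) * (h powr (Q+1)) powr (1/Q) * (1/(Q+1)) powr (1/Q)"
    by (simp add: powr_divide)
  also have "(h powr (Q+1)) powr (1/Q) = h powr (1 + 1/Q)"
    using Q by (simp add: powr_powr field_simps)
  also have "(2*h) powr (1 + 1/Q) = 2 * 2 powr (1/Q) * h powr (1 + 1/Q)"
    using h by (simp add: powr_mult powr_add)
  ultimately show ?thesis by simp
qed

lemma bound_pfin:
  fixes f g :: "real \<Rightarrow> real" and P Q :: real
  assumes ab: "a < b" and ac: "abs_continuous_on a b f"
    and der: "AE x in lebesgue_on {a..b}. (f has_real_derivative g x) (at x)"
    and P: "P > 1" and Q: "Q > 1" and PQ: "1/P + 1/Q = 1"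
    and mem: "memLp (ereal P) a b g"
  shows "\<bar>E1 a b f\<bar> \<le> trap_coeff (ereal P) (ereal Q) * Lp_norm (ereal P) a b g * (b - a) powr trap_expo (ereal P) (ereal Q)"
proof -
  let ?M = "lebesgue_on {a..b}"
  have gm: "g \<in> borel_measurable ?M" and gi: "integrable ?M (\<lambda>x. \<bar>g x\<bar> powr P)"
    using mem by (auto simp: memLp_def)
  define h where "h = (b-a)/2"
  have h0: "h > 0" using ab by (simp add: h_def)
  have wi: "integrable ?M (\<lambda>x. \<bar>x - (a+b)/2\<bar> powr Q)"
    and wI: "integral\<^sup>L ?M (\<lambda>x. \<bar>x - (a+b)/2\<bar> powr Q) = 2 * h powr (Q+1) / (Q+1)"
    using int_abs_powr_L[OF ab, of Q] Q by (auto simp: h_def)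
  have A: "integral\<^sup>L ?M (\<lambda>x. \<bar>x - (a+b)/2\<bar> powr Q) > 0" using wI h0 Q by simp
  have H: "integrable ?M (\<lambda>x. \<bar>x - (a+b)/2\<bar> * \<bar>g x\<bar>) \<and>
     integral\<^sup>L ?M (\<lambda>x. \<bar>x - (a+b)/2\<bar> * \<bar>g x\<bar>) \<le>
     (integral\<^sup>L ?M (\<lambda>x. \<bar>x - (a+b)/2\<bar> powr Q)) powr (1/Q) * (integral\<^sup>L ?M (\<lambda>x. \<bar>g x\<bar> powr P)) powr (1/P)"
    by (rule holder_special[OF P Q PQ _ _ _ _ wi gi A]) (use gm meas_w in auto)
  have int: "integrable ?M (\<lambda>x. (x - (a+b)/2) * g x)"
  proof (rule Bochner_Integration.integrable_bound[OF conjunct1[OF H] meas_wg(1)[OF gm]])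
    show "AE x in ?M. norm ((x - (a+b)/2) * g x) \<le> norm (\<bar>x - (a+b)/2\<bar> * \<bar>g x\<bar>)"
      by (simp add: abs_mult)
  qed
  have "\<bar>E1 a b f\<bar> \<le> integral\<^sup>L ?M (\<lambda>x. \<bar>x - (a+b)/2\<bar> * \<bar>g x\<bar>)"
    by (rule E1_bound_L[OF ab ac der int])
  also have "\<dots> \<le> (2 * h powr (Q+1) / (Q+1)) powr (1/Q) * Lp_norm (ereal P) a b g"
    using conjunct2[OF H] wI by (simp add: Lp_norm_def)
  also have "\<dots> = trap_coeff (ereal P) (ereal Q) * Lp_norm (ereal P) a b g * (b - a) powr trap_expo (ereal P) (ereal Q)"
  proof -
    have "P \<noteq> 1" using P by simp
    have "b - a = 2 * h" by (simp add: h_def)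
    then show ?thesis using const_eq[OF h0, of Q] Q P
      by (simp add: trap_coeff_def trap_expo_def)
  qed
  finally show ?thesis .
qed



definition frr :: "real \<Rightarrow> real \<Rightarrow> real \<Rightarrow> real \<Rightarrow> real" where
  "frr a b r x = \<bar>x - (a+b)/2\<bar> powr r / r"

definition grr :: "real \<Rightarrow> real \<Rightarrow> real \<Rightarrow> real \<Rightarrow> real" where
  "grr a b r x = sgn (x - (a+b)/2) * \<bar>x - (a+b)/2\<bar> powr (r - 1)"

lemma aux_t1: fixes r h Y :: real assumes "r > 0"
  shows "2 * (h * Y) / (r+1) / r - h * (Y / r + Y / r) = - (2 * (h * Y) / (r+1))"
proof -
  have e: "h * (Y / r + Y / r) = 2 * (h * Y) / r" by (simp add: field_simps)
  have "2 * (h * Y) / (r+1) / r - 2 * (h * Y) / r = 2 * (h * Y) * (1 / ((r+1) * r) - 1 / r)"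
    by (simp add: field_simps)
  also have "1 / ((r+1) * r) - 1 / r = - 1 / (r+1)"
  proof -
    have p: "r * r > 0" "r * (r * r) > 0" using assms by simp_all
    have nz: "r + r * r \<noteq> 0" "r * r + r * (r * r) \<noteq> 0" using assms p by linarith+
    show ?thesis using assms nz by (simp add: field_simps)
  qed
  finally have F: "2 * (h * Y) / (r+1) / r - 2 * (h * Y) / r = 2 * (h * Y) * (- 1 / (r+1))" .
  show ?thesis unfolding e F by simp
qed

lemma pow_lip:
  fixes s t H r :: real
  assumes t: "0 \<le> t" "t \<le> s" and sH: "s \<le> H" and r: "1 \<le> r"
  shows "s powr r - t powr r \<le> r * H powr (r-1) * (s - t)"
proof (cases "t = s")
  case True then show ?thesis by simp
next
  case False
  then have ts: "t < s" using t by simp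
  have H0: "H powr (r-1) \<ge> 0" by simp
  show ?thesis
  proof (cases "t = 0")
    case True
    have s0: "s > 0" using ts True by simp
    have "s powr r = s * s powr (r-1)"
      using s0 powr_add[of s 1 "r-1"] by simp
    also have "\<dots> \<le> s * H powr (r-1)"
      using s0 sH r by (intro mult_left_mono powr_mono2) auto
    also have "\<dots> \<le> r * H powr (r-1) * s"
    proof -
      have "1 * H powr (r-1) \<le> r * H powr (r-1)" by (rule mult_right_mono[OF r H0])
      then show ?thesis using s0 by (simp add: mult.commute mult_left_mono)
    qed
    finally show ?thesis using True by simp
  next
    case False
    then have t0: "t > 0" using t by simp
    have dd: "((\<lambda>z. z powr r) has_real_derivative r * x powr (r - 1)) (at x)" if "t \<le> x" "x \<le> s" for x
      using that t0 by (intro has_real_derivative_powr) auto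
    obtain z where z: "t < z" "z < s" "s powr r - t powr r = (s - t) * (r * z powr (r - 1))"
      using MVT2[OF ts dd] by blast
    have "z powr (r-1) \<le> H powr (r-1)" using z t0 sH r by (intro powr_mono2) auto
    then have "(s - t) * (r * z powr (r - 1)) \<le> (s - t) * (r * H powr (r - 1))"
      using ts r by (intro mult_left_mono) auto
    then show ?thesis using z(3) by (simp add: algebra_simps)
  qed
qed

lemma pow_lip_abs:
  fixes s t H r :: real
  assumes "0 \<le> t" "t \<le> H" "0 \<le> s" "s \<le> H" "1 \<le> r"
  shows "\<bar>s powr r - t powr r\<bar> \<le> r * H powr (r-1) * \<bar>s - t\<bar>"
proof (cases "t \<le> s")
  case True then show ?thesis using pow_lip[of t s H r] assms
    by (smt (verit) powr_mono2 True)
next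
  case False then show ?thesis using pow_lip[of s t H r] assms
    by (smt (verit) powr_mono2)
qed

lemma lip_ac:
  fixes f :: "real \<Rightarrow> real"
  assumes L: "L \<ge> 0" and lip: "\<And>x y. x \<in> {a..b} \<Longrightarrow> y \<in> {a..b} \<Longrightarrow> \<bar>f y - f x\<bar> \<le> L * \<bar>y - x\<bar>"
  shows "abs_continuous_on a b f"
  unfolding abs_continuous_on_def
proof (intro allI impI)
  fix \<epsilon> :: real assume \<epsilon>: "\<epsilon> > 0"
  show "\<exists>\<delta>>0. \<forall>(n::nat) x y. (\<forall>i<n. a \<le> x i \<and> x i \<le> y i \<and> y i \<le> b) \<and>
        (\<forall>i<n. \<forall>j<n. i \<noteq> j \<longrightarrow> y i \<le> x j \<or> y j \<le> x i) \<and>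
        (\<Sum>i<n. y i - x i) < \<delta> \<longrightarrow> (\<Sum>i<n. \<bar>f (y i) - f (x i)\<bar>) < \<epsilon>"
  proof (intro exI[of _ "\<epsilon> / (L + 1)"] conjI allI impI)
    show "\<epsilon> / (L + 1) > 0" using \<epsilon> L by simp
    fix n :: nat and X Y assume A: "(\<forall>i<n. a \<le> X i \<and> X i \<le> Y i \<and> Y i \<le> b) \<and>
        (\<forall>i<n. \<forall>j<n. i \<noteq> j \<longrightarrow> Y i \<le> X j \<or> Y j \<le> X i) \<and> (\<Sum>i<n. Y i - X i) < \<epsilon> / (L + 1)"
    have "(\<Sum>i<n. \<bar>f (Y i) - f (X i)\<bar>) \<le> (\<Sum>i<n. L * (Y i - X i))"
    proof (rule sum_mono)
      fix i assume "i \<in> {..<n}"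
      then have "a \<le> X i" "X i \<le> Y i" "Y i \<le> b" using A by auto
      then show "\<bar>f (Y i) - f (X i)\<bar> \<le> L * (Y i - X i)" using lip[of "X i" "Y i"] by auto
    qed
    also have "\<dots> = L * (\<Sum>i<n. Y i - X i)" by (simp add: sum_distrib_left)
    also have "\<dots> \<le> L * (\<epsilon> / (L + 1))" using A L by (intro mult_left_mono) auto
    also have "\<dots> < \<epsilon>" using L \<epsilon> by (simp add: field_simps)
    finally show "(\<Sum>i<n. \<bar>f (Y i) - f (X i)\<bar>) < \<epsilon>" .
  qed
qed

lemma frr_ac:
  assumes ab: "a < b" and r: "r \<ge> 1"
  shows "abs_continuous_on a b (frr a b r)"
proof (rule lip_ac)
  let ?h = "(b-a)/2"
  show "((b-a)/2) powr (r-1) \<ge> 0" by simp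
  fix x y assume xy: "x \<in> {a..b}" "y \<in> {a..b}"
  have "\<bar>\<bar>y - (a+b)/2\<bar> powr r - \<bar>x - (a+b)/2\<bar> powr r\<bar> \<le> r * ?h powr (r-1) * \<bar>\<bar>y - (a+b)/2\<bar> - \<bar>x - (a+b)/2\<bar>\<bar>"
    by (rule pow_lip_abs) (use absdiff_le[OF xy(1)] absdiff_le[OF xy(2)] r in auto)
  also have "\<dots> \<le> r * ?h powr (r-1) * \<bar>y - x\<bar>"
    using r by (intro mult_left_mono) auto
  finally have "\<bar>\<bar>y - (a+b)/2\<bar> powr r - \<bar>x - (a+b)/2\<bar> powr r\<bar> \<le> r * (?h powr (r-1) * \<bar>y - x\<bar>)" by simp
  then show "\<bar>frr a b r y - frr a b r x\<bar> \<le> ((b-a)/2) powr (r-1) * \<bar>y - x\<bar>"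
    using r unfolding frr_def by (simp add: diff_divide_distrib[symmetric] field_simps)
qed

lemma frr_deriv:
  assumes r: "r > 0" and x: "x \<noteq> (a+b)/2"
  shows "(frr a b r has_real_derivative grr a b r x) (at x)"
proof -
  define m where "m = (a+b)/2"
  show ?thesis
  proof (cases "x > m")
    case True
    have d0: "((\<lambda>y. (y - m) powr r) has_real_derivative r * (x - m) powr (r - 1)) (at x)"
      using True by (auto intro!: derivative_eq_intros)
    have d: "((\<lambda>y. (y - m) powr r / r) has_real_derivative grr a b r x) (at x)"
      using DERIV_cdivide[OF d0, of r] r True by (simp add: grr_def m_def[symmetric])
    show ?thesis
      by (rule has_field_derivative_transform_within_open[OF d, of "{m<..}"])
         (use True in \<open>auto simp: frr_def m_def[symmetric]\<close>)
  next
    case False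
    then have xm: "x < m" using x m_def by auto
    have d0: "((\<lambda>y. (m - y) powr r) has_real_derivative r * (m - x) powr (r - 1) * (-1)) (at x)"
      using xm by (auto intro!: derivative_eq_intros)
    have d: "((\<lambda>y. (m - y) powr r / r) has_real_derivative grr a b r x) (at x)"
      using DERIV_cdivide[OF d0, of r] r xm by (simp add: grr_def m_def[symmetric] abs_minus_commute)
    show ?thesis
      by (rule has_field_derivative_transform_within_open[OF d, of "{..<m}"])
         (use xm in \<open>auto simp: frr_def m_def[symmetric] abs_minus_commute\<close>)
  qed
qed

lemma ae_neq:
  fixes a b m :: real
  shows "AE x in lebesgue_on {a..b}. x \<noteq> m"
proof (rule AE_I')
  have ab: "{a..b} \<in> sets lebesgue" using lmeasurable_interval(1)[of a b] fmeasurableD by blast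
  have "{m} \<inter> {a..b} \<in> null_sets lebesgue"
    using negligible_iff_null_sets[of "{m} \<inter> {a..b}"] by (simp add: negligible_finite)
  then show "{m} \<inter> {a..b} \<in> null_sets (lebesgue_on {a..b})"
    using null_sets_restrict_space[OF ab] by blast
qed auto

lemma frr_AE:
  assumes r: "r > 0"
  shows "AE x in lebesgue_on {a..b}. (frr a b r has_real_derivative grr a b r x) (at x)"
  using ae_neq[where a=a and b=b and m="(a+b)/2"] by eventually_elim (use frr_deriv r in auto)

lemma frr_E1:
  assumes ab: "a < b" and r: "r > 0"
  shows "E1 a b (frr a b r) = - (2 * ((b-a)/2) powr (r+1) / (r+1))"
proof -
  define h where "h = (b-a)/2"
  have h0: "h > 0" using ab by (simp add: h_def)
  have "((\<lambda>x. \<bar>x - (a+b)/2\<bar> powr r / r) has_integral (2 * h powr (r+1) / (r+1)) / r) {a..b}"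
    using has_integral_divide[OF int_abs_powr[OF ab r], of r] by (simp add: h_def)
  then have I: "integral {a..b} (frr a b r) = (2 * h powr (r+1) / (r+1)) / r"
    unfolding frr_def by (rule integral_unique)
  have "\<bar>a - (a+b)/2\<bar> = h" "\<bar>b - (a+b)/2\<bar> = h" using ab by (auto simp: h_def abs_if field_simps)
  then have fa: "frr a b r a = h powr r / r" and fb: "frr a b r b = h powr r / r"
    unfolding frr_def by simp_all
  have hp: "h powr (r+1) = h * h powr r" using h0 by (simp add: powr_add)
  have r1: "r + 1 > 0" using r by simp
  have ba: "(b - a) / 2 = h" by (simp add: h_def)
  have "E1 a b (frr a b r) = 2 * (h * h powr r) / (r+1) / r - h * (h powr r / r + h powr r / r)"
    unfolding E1_def I fa fb hp ba ..
  also have "\<dots> = - (2 * (h * h powr r) / (r+1))"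
    by (rule aux_t1[OF r])
  finally have "E1 a b (frr a b r) = - (2 * (h * h powr r) / (r+1))" .
  then show ?thesis unfolding h_def[symmetric] hp .
qed

lemma grr_abs: "\<bar>grr a b r x\<bar> = \<bar>x - (a+b)/2\<bar> powr (r - 1)"
  by (cases "x = (a+b)/2") (auto simp: grr_def abs_mult abs_sgn_eq)

lemma grr_meas: "grr a b r \<in> borel_measurable (lebesgue_on {a..b})"
  unfolding grr_def using meas_w[of "(a+b)/2" a b] by measurable



lemma sharp_pinf:
  fixes a b C :: real
  assumes ab: "a < b" and C: "C < trap_coeff \<infinity> 1"
  shows "\<exists>f g. abs_continuous_on a b f \<and>
              (AE x in lebesgue_on {a..b}. (f has_real_derivative g x) (at x)) \<and>
              memLp \<infinity> a b g \<and>
              \<bar>E1 a b f\<bar> > C * Lp_norm \<infinity> a b g * (b - a) powr trap_expo \<infinity> 1"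
proof (intro exI conjI)
  let ?M = "lebesgue_on {a..b}"
  define h where "h = (b-a)/2"
  have h0: "h > 0" using ab by (simp add: h_def)
  have C': "C < 1/4" using C by (simp add: trap_coeff_def)
  show "abs_continuous_on a b (frr a b 1)" by (rule frr_ac[OF ab]) simp
  show "AE x in ?M. (frr a b 1 has_real_derivative grr a b 1 x) (at x)" by (rule frr_AE) simp
  have gle: "\<bar>grr a b 1 x\<bar> \<le> 1" for x by (simp add: grr_abs)
  show mem: "memLp \<infinity> a b (grr a b 1)"
    unfolding memLp_def using grr_meas gle by (auto intro!: exI[of _ 1])
  define N where "N = Lp_norm \<infinity> a b (grr a b 1)"
  have N0: "N \<ge> 0" using ess_bound(2)[OF mem] by (simp add: N_def)
  have N1: "N \<le> 1"
  proof -
    have "N = Inf {C. 0 \<le> C \<and> (AE x in ?M. \<bar>grr a b 1 x\<bar> \<le> C)}" by (simp add: N_def Lp_norm_def)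
    also have "\<dots> \<le> 1" by (rule cInf_lower) (use gle in \<open>auto intro!: bdd_belowI[of _ 0]\<close>)
    finally show ?thesis .
  qed
  have E: "\<bar>E1 a b (frr a b 1)\<bar> = h^2"
    using frr_E1[OF ab, of 1] h0 by (simp add: h_def[symmetric] powr_numeral)
  have ba: "(b - a) powr trap_expo \<infinity> 1 = 4 * h^2"
    using ab by (simp add: trap_expo_def powr_numeral h_def power2_eq_square field_simps)
  have "C * N * (4 * h^2) < h^2"
  proof (cases "C \<le> 0")
    case True
    then have "C * N * (4 * h^2) \<le> 0" using N0 by (simp add: mult_nonpos_nonneg)
    then show ?thesis using h0 by (smt (verit) zero_less_power)
  next
    case False
    have "C * N * (4 * h^2) \<le> C * 1 * (4 * h^2)"
      using False N1 h0 by (intro mult_right_mono mult_left_mono) auto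
    also have "\<dots> < h^2" using C' h0 by simp
    finally show ?thesis .
  qed
  then show "\<bar>E1 a b (frr a b 1)\<bar> > C * Lp_norm \<infinity> a b (grr a b 1) * (b - a) powr trap_expo \<infinity> 1"
    using E ba by (simp add: N_def)
qed

lemma sharp_p1:
  fixes a b C :: real
  assumes ab: "a < b" and C: "C < trap_coeff 1 \<infinity>"
  shows "\<exists>f g. abs_continuous_on a b f \<and>
              (AE x in lebesgue_on {a..b}. (f has_real_derivative g x) (at x)) \<and>
              memLp 1 a b g \<and>
              \<bar>E1 a b f\<bar> > C * Lp_norm 1 a b g * (b - a) powr trap_expo 1 \<infinity>"
proof -
  let ?M = "lebesgue_on {a..b}"
  define c where "c = max C 0"
  have c: "c < 1/2" "c \<ge> 0" "C \<le> c" using C by (auto simp: c_def trap_coeff_def)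
  define d where "d = 1 - 2 * c"
  have d0: "d > 0" using c by (simp add: d_def)
  define r where "r = 1/d + 1"
  have r1: "r > 1" using d0 by (simp add: r_def)
  have key: "2 * c * (r + 1) < r"
  proof -
    have cd: "2 * c = 1 - d" by (simp add: d_def)
    have "r - 2 * c * (r + 1) = r - (1 - d) * (r + 1)" by (simp add: cd)
    also have "\<dots> = 2 * d" unfolding r_def using d0 by (simp add: field_simps)
    finally have "r - 2 * c * (r + 1) = 2 * d" .
    then show ?thesis using d0 by simp
  qed
  define h where "h = (b-a)/2"
  have h0: "h > 0" using ab by (simp add: h_def)
  show ?thesis
  proof (intro exI conjI)
    show "abs_continuous_on a b (frr a b r)" by (rule frr_ac[OF ab]) (use r1 in simp)
    show "AE x in ?M. (frr a b r has_real_derivative grr a b r x) (at x)" by (rule frr_AE) (use r1 in simp)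
    have gp: "(\<lambda>x. \<bar>grr a b r x\<bar> powr real_of_ereal 1) = (\<lambda>x. \<bar>x - (a+b)/2\<bar> powr (r - 1))"
      by (simp add: grr_abs)
    have L: "integrable ?M (\<lambda>x. \<bar>x - (a+b)/2\<bar> powr (r - 1))"
        "integral\<^sup>L ?M (\<lambda>x. \<bar>x - (a+b)/2\<bar> powr (r - 1)) = 2 * h powr r / r"
      using int_abs_powr_L[OF ab, of "r - 1"] r1 by (auto simp: h_def)
    show "memLp 1 a b (grr a b r)" unfolding memLp_def gp using grr_meas L by simp
    have N: "Lp_norm 1 a b (grr a b r) = 2 * h powr r / r"
      unfolding Lp_norm_def using gp L h0 r1 by simp
    define K where "K = h * h powr r"
    have K0: "K > 0" using h0 by (simp add: K_def)
    have E: "\<bar>E1 a b (frr a b r)\<bar> = 2 * K / (r + 1)"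
      using frr_E1[OF ab, of r] r1 h0 by (simp add: h_def[symmetric] K_def powr_add)
    have "C * Lp_norm 1 a b (grr a b r) * (b - a) powr trap_expo 1 \<infinity> = C * (4 * K / r)"
      using ab r1 by (simp add: N trap_expo_def K_def h_def field_simps)
    also have "\<dots> \<le> c * (4 * K / r)" using c K0 r1 by (intro mult_right_mono) auto
    also have "\<dots> < 2 * K / (r + 1)"
    proof -
      have rr: "r * r > 0" using r1 by simp
      have nz: "r + r * r \<noteq> 0" "r * r + r \<noteq> 0" using r1 rr by linarith+
      have "c * (4 * K / r) = (2 * c * (r + 1)) * (2 * K / (r * (r + 1)))" using r1 nz by (simp add: field_simps)
      also have "\<dots> < r * (2 * K / (r * (r + 1)))"
        using key K0 r1 by (intro mult_strict_right_mono) auto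
      also have "\<dots> = 2 * K / (r + 1)" using r1 nz by (simp add: field_simps)
      finally show ?thesis .
    qed
    finally show "\<bar>E1 a b (frr a b r)\<bar> > C * Lp_norm 1 a b (grr a b r) * (b - a) powr trap_expo 1 \<infinity>"
      using E by simp
  qed
qed

lemma sharp_pfin:
  fixes a b C P Q :: real
  assumes ab: "a < b" and P: "P > 1" and Q: "Q > 1" and PQ: "1/P + 1/Q = 1"
    and C: "C < trap_coeff (ereal P) (ereal Q)"
  shows "\<exists>f g. abs_continuous_on a b f \<and>
              (AE x in lebesgue_on {a..b}. (f has_real_derivative g x) (at x)) \<and>
              memLp (ereal P) a b g \<and>
              \<bar>E1 a b f\<bar> > C * Lp_norm (ereal P) a b g * (b - a) powr trap_expo (ereal P) (ereal Q)"
proof -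
  let ?M = "lebesgue_on {a..b}"
  define h where "h = (b-a)/2"
  have h0: "h > 0" using ab by (simp add: h_def)
  define I where "I = 2 * h powr (Q+1) / (Q+1)"
  have I0: "I > 0" using h0 Q by (simp add: I_def)
  have QP: "(Q - 1) * P = Q"
  proof -
    have "P * Q = P + Q" using PQ P Q by (simp add: field_simps)
    then show ?thesis by (simp add: algebra_simps)
  qed
  have gp: "(\<lambda>x. \<bar>grr a b Q x\<bar> powr real_of_ereal (ereal P)) = (\<lambda>x. \<bar>x - (a+b)/2\<bar> powr Q)"
    by (simp add: grr_abs powr_powr QP)
  have L: "integrable ?M (\<lambda>x. \<bar>x - (a+b)/2\<bar> powr Q)"
      "integral\<^sup>L ?M (\<lambda>x. \<bar>x - (a+b)/2\<bar> powr Q) = I"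
    using int_abs_powr_L[OF ab, of Q] Q by (auto simp: h_def I_def)
  have pn: "ereal P \<noteq> 1" "ereal P \<noteq> \<infinity>" using P by auto
  have coeff: "trap_coeff (ereal P) (ereal Q) = 1/2 * (1 / (Q + 1)) powr (1 / Q)"
    and expo: "trap_expo (ereal P) (ereal Q) = 1 + 1/Q"
    using pn by (simp_all add: trap_coeff_def trap_expo_def)
  have ceq: "I powr (1/Q) = trap_coeff (ereal P) (ereal Q) * (b - a) powr trap_expo (ereal P) (ereal Q)"
  proof -
    have "b - a = 2 * h" by (simp add: h_def)
    then show ?thesis using const_eq[OF h0, of Q] Q unfolding coeff expo I_def by simp
  qed
  have Isplit: "I = I powr (1/P) * I powr (1/Q)"
    using I0 PQ by (simp add: powr_add[symmetric])
  show ?thesis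
  proof (intro exI conjI)
    show "abs_continuous_on a b (frr a b Q)" by (rule frr_ac[OF ab]) (use Q in simp)
    show "AE x in ?M. (frr a b Q has_real_derivative grr a b Q x) (at x)" by (rule frr_AE) (use Q in simp)
    show "memLp (ereal P) a b (grr a b Q)" unfolding memLp_def gp using grr_meas L pn by simp
    have N: "Lp_norm (ereal P) a b (grr a b Q) = I powr (1/P)"
      unfolding Lp_norm_def using gp L pn by simp
    have E: "\<bar>E1 a b (frr a b Q)\<bar> = I"
      using frr_E1[OF ab, of Q] Q I0 by (simp add: h_def[symmetric] I_def)
    define X where "X = I powr (1/P) * (b - a) powr trap_expo (ereal P) (ereal Q)"
    have X0: "X > 0" using I0 ab by (simp add: X_def)
    have "C * Lp_norm (ereal P) a b (grr a b Q) * (b - a) powr trap_expo (ereal P) (ereal Q) = C * X"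
      by (simp add: N X_def)
    also have "\<dots> < trap_coeff (ereal P) (ereal Q) * X" using C X0 by simp
    also have "\<dots> = I" using Isplit ceq unfolding X_def by (metis mult.left_commute)
    finally show "\<bar>E1 a b (frr a b Q)\<bar> > C * Lp_norm (ereal P) a b (grr a b Q) * (b - a) powr trap_expo (ereal P) (ereal Q)"
      using E by simp
  qed
qed



theorem corollary2p2:
  fixes a b :: real and p q :: ereal
  assumes "a < b" and "conjugate_exponents p q"
  shows "(\<forall>f g. abs_continuous_on a b f \<and>
              (AE x in lebesgue_on {a..b}. (f has_real_derivative g x) (at x)) \<and>
              memLp p a b g
           \<longrightarrow> \<bar>E1 a b f\<bar> \<le> trap_coeff p q * Lp_norm p a b g * (b - a) powr trap_expo p q)
       \<and> (\<forall>C < trap_coeff p q. \<exists>f g. abs_continuous_on a b f \<and>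
              (AE x in lebesgue_on {a..b}. (f has_real_derivative g x) (at x)) \<and>
              memLp p a b g \<and>
              \<bar>E1 a b f\<bar> > C * Lp_norm p a b g * (b - a) powr trap_expo p q)"
proof -
  consider (one) "p = 1" "q = \<infinity>" | (inf) "p = \<infinity>" "q = 1"
    | (fin) "1 < p" "p < \<infinity>" "1 < q" "q < \<infinity>" "1 / real_of_ereal p + 1 / real_of_ereal q = 1"
    using assms(2) unfolding conjugate_exponents_def by blast
  then show ?thesis
  proof cases
    case one
    show ?thesis unfolding one using bound_p1[OF assms(1)] sharp_p1[OF assms(1)] by blast
  next
    case inf
    show ?thesis unfolding inf using bound_pinf[OF assms(1)] sharp_pinf[OF assms(1)] by blast
  next
    case fin
    obtain P where p: "p = ereal P" using fin by (cases p) auto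
    obtain Q where q: "q = ereal Q" using fin by (cases q) auto
    have P: "P > 1" and Q: "Q > 1" and PQ: "1/P + 1/Q = 1" using fin p q by auto
    show ?thesis unfolding p q
      using bound_pfin[OF assms(1) _ _ P Q PQ] sharp_pfin[OF assms(1) P Q PQ] by blast
  qed
qed


end
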